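(* Let $(X,\mathbf h,\Lambda,\widetilde B)$ be a quantum seed, $i\neq j\in[1,n]$, and let $\mathbb L_0^{\vee\vee}=\mathbb{ZP}[X_k^{\pm1}\mid k\in[1,n]\setminus\{i,j\}]$. Let $f_1,f_2\in\bigoplus_{k\in[1,m]\setminus\{i,j\}}\mathbb Z e_k$ satisfy $\Lambda(f_1,e_k)=\Lambda(f_2,e_k)=0$ for all $k\in[1,m]\setminus\{i,j\}$. Let $N,N_1$ be positive integers and $$V_1=\prod_{l=1}^{N}\Big(\sum_{r=0}^{s_l}\xi_{l,r}X(rf_1)\Big),\qquad V_2=\prod_{l=1}^{N_1}\Big(\sum_{r=0}^{t_l}\zeta_{l,r}X(rf_2)\Big),$$ with $s_l,t_l\ge0$, coefficients $\xi_{l,r},\zeta_{l,r}\in\mathbb Z[q^{\pm1/2}]$, and $\xi_{l,s_l}=\zeta_{l,t_l}=1$ for all $l$. If $f_1$ and $f_2$ are $\mathbb Z$-linearly independent, then $V_1$ and $V_2$ are coprime in the center of $\mathbb L_0^{\vee\vee}$ (i.e. they have no common non-invertible divisor in that commutative ring).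
   Context: Notation: $[a,b]=\{a,a+1,\dots,b\}$; $[x]_+=\max(x,0)$, applied entrywise to vectors; $e_1,\dots,e_m$ is the standard basis of $\mathbb Z^m$. Fix integers $m\ge n\ge 1$. A compatible pair $(\Lambda,\widetilde B)$ consists of an $m\times n$ integer matrix $\widetilde B=(b_{kl})$ and a skew-symmetric $m\times m$ integer matrix $\Lambda=(\lambda_{kl})$ such that $\Lambda\widetilde B=-\begin{bmatrix}D\\0\end{bmatrix}$ for some $D=\mathrm{diag}(\tilde d_1,\dots,\tilde d_n)$ with all $\tilde d_k\in\mathbb Z_{>0}$. Write $\Lambda(a,b)=a^T\Lambda b$. Fix positive integers $d_1,\dots,d_n$ such that $d_k$ divides every entry of the $k$-th column $b^k$ of $\widetilde B$; $\beta^k=\frac1{d_k}b^k$. The quantum torus $\mathcal T(\Lambda)$ is the $\mathbb Z[q^{\pm1/2}]$-algebra with basis $\{X(c)\mid c\in\mathbb Z^m\}$ and multiplication $X(c)X(d)=q^{\frac12\Lambda(c,d)}X(c+d)$; $\mathcal F$ is its skew field of fractions, and $X_k=X(e_k)$. For each $k\in[1,n]$, $\mathbf h_k=(h_{k,0},\dots,h_{k,d_k})$ with $h_{k,r}\in\mathbb Z[q^{\pm1/2}]$, $h_{k,r}=h_{k,d_k-r}$, $h_{k,0}=h_{k,d_k}=1$; $\mathbf h=(\mathbf h_1,\dots,\mathbf h_n)$. A quantum seed $(X,\mathbf h,\Lambda,\widetilde B)$ consists of these data with $X$ the map $c\mapsto X(c)$. $\mathbb{ZP}$ is the ring of Laurent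 polynomials in $X_{n+1},\dots,X_m$ with coefficients in $\mathbb Z[q^{\pm1/2}]$; for $Y_1,\dots,Y_s\in\mathcal F$, $\mathbb{ZP}[Y_1,\dots,Y_s]$ is the subring of $\mathcal F$ generated by $\mathbb{ZP}$ and the $Y_k$ (exponent $\pm1$ means both $Y$ and $Y^{-1}$ are adjoined). *)

theory Defs
  imports Main
begin

text \<open>Scalars: the ring Z[q^(1/2), q^(-1/2)] is represented by Laurent polynomials
in v = q^(1/2); p a is the coefficient of v^a.\<close>
type_synonym lpoly = "int \<Rightarrow> int"
text \<open>Integer vectors in Z^m: functions nat to int vanishing outside [1,m].\<close>
type_synonym ivec = "nat \<Rightarrow> int"
text \<open>Elements of the quantum torus: P c a is the coefficient of v^a X(c).\<close>
type_synonym qelem = "ivec \<Rightarrow> int \<Rightarrow> int"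

definition lp_one :: lpoly where "lp_one = (\<lambda>a. if a = 0 then 1 else 0)"

definition is_lpoly :: "lpoly \<Rightarrow> bool" where
  "is_lpoly p \<longleftrightarrow> finite {a. p a \<noteq> 0}"

definition in_Zm :: "nat \<Rightarrow> ivec \<Rightarrow> bool" where
  "in_Zm m c \<longleftrightarrow> (\<forall>k. k \<notin> {1..m} \<longrightarrow> c k = 0)"

definition unitvec :: "nat \<Rightarrow> ivec" where
  "unitvec k = (\<lambda>l. if l = k then 1 else 0)"

definition bil :: "nat \<Rightarrow> (nat \<Rightarrow> nat \<Rightarrow> int) \<Rightarrow> ivec \<Rightarrow> ivec \<Rightarrow> int" where
  "bil m Lam c d = (\<Sum>k\<in>{1..m}. \<Sum>l\<in>{1..m}. c k * Lam k l * d l)"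

definition qsupp :: "qelem \<Rightarrow> (ivec \<times> int) set" where
  "qsupp P = {(c, a). P c a \<noteq> 0}"

definition qtorus :: "nat \<Rightarrow> qelem set" where
  "qtorus m = {P. finite (qsupp P) \<and> (\<forall>(c, a)\<in>qsupp P. in_Zm m c)}"

definition qadd :: "qelem \<Rightarrow> qelem \<Rightarrow> qelem" where
  "qadd P Q = (\<lambda>c a. P c a + Q c a)"

definition qneg :: "qelem \<Rightarrow> qelem" where
  "qneg P = (\<lambda>c a. - P c a)"

text \<open>Twisted product: X(c)X(d) = q^(Lambda(c,d)/2) X(c+d) = v^(Lambda(c,d)) X(c+d).\<close>
definition qmult :: "nat \<Rightarrow> (nat \<Rightarrow> nat \<Rightarrow> int) \<Rightarrow> qelem \<Rightarrow> qelem \<Rightarrow> qelem" where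
  "qmult m Lam P Q = (\<lambda>e a. \<Sum>(c, a1)\<in>qsupp P. \<Sum>(d, a2)\<in>qsupp Q.
      if (\<lambda>k. c k + d k) = e \<and> a1 + a2 + bil m Lam c d = a then P c a1 * Q d a2 else 0)"

definition qmonom :: "lpoly \<Rightarrow> ivec \<Rightarrow> qelem" where
  "qmonom xi c = (\<lambda>d a. if d = c then xi a else 0)"

definition qX :: "ivec \<Rightarrow> qelem" where
  "qX c = qmonom lp_one c"

definition qone :: qelem where
  "qone = qX (\<lambda>_. 0)"

text \<open>ZP: Laurent polynomials in the frozen variables X_(n+1),...,X_m over Z[q^(+-1/2)].\<close>
definition ZP :: "nat \<Rightarrow> nat \<Rightarrow> qelem set" where
  "ZP m n = {P \<in> qtorus m. \<forall>(c, a)\<in>qsupp P. \<forall>k\<in>{1..n}. c k = 0}"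

text \<open>Subring (of the quantum torus, hence of its skew field) generated by A and G.\<close>
inductive_set subring_gen :: "nat \<Rightarrow> (nat \<Rightarrow> nat \<Rightarrow> int) \<Rightarrow> qelem set \<Rightarrow> qelem set \<Rightarrow> qelem set"
  for m Lam A G where
  sg_base: "P \<in> A \<Longrightarrow> P \<in> subring_gen m Lam A G"
| sg_gen: "P \<in> G \<Longrightarrow> P \<in> subring_gen m Lam A G"
| sg_one: "qone \<in> subring_gen m Lam A G"
| sg_add: "P \<in> subring_gen m Lam A G \<Longrightarrow> Q \<in> subring_gen m Lam A G \<Longrightarrow> qadd P Q \<in> subring_gen m Lam A G"
| sg_neg: "P \<in> subring_gen m Lam A G \<Longrightarrow> qneg P \<in> subring_gen m Lam A G"
| sg_mult: "P \<in> subring_gen m Lam A G \<Longrightarrow> Q \<in> subring_gen m Lam A G \<Longrightarrow> qmult m Lam P Q \<in> subring_gen m Lam A G"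

text \<open>L_0^{vee vee} = ZP[X_k^{+-1} | k in [1,n] - {i,j}]; note X_k^{-1} = X(-e_k).\<close>
definition L0vv :: "nat \<Rightarrow> nat \<Rightarrow> (nat \<Rightarrow> nat \<Rightarrow> int) \<Rightarrow> nat \<Rightarrow> nat \<Rightarrow> qelem set" where
  "L0vv m n Lam i j = subring_gen m Lam (ZP m n)
     {qX (\<lambda>l. s * unitvec k l) | k s. k \<in> {1..n} - {i, j} \<and> (s = 1 \<or> s = -1)}"

definition center :: "nat \<Rightarrow> (nat \<Rightarrow> nat \<Rightarrow> int) \<Rightarrow> qelem set \<Rightarrow> qelem set" where
  "center m Lam R = {z \<in> R. \<forall>y\<in>R. qmult m Lam z y = qmult m Lam y z}"

definition coprime_in :: "nat \<Rightarrow> (nat \<Rightarrow> nat \<Rightarrow> int) \<Rightarrow> qelem set \<Rightarrow> qelem \<Rightarrow> qelem \<Rightarrow> bool" where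
  "coprime_in m Lam R a b \<longleftrightarrow>
     (\<forall>d\<in>R. (\<exists>x\<in>R. a = qmult m Lam d x) \<and> (\<exists>y\<in>R. b = qmult m Lam d y)
        \<longrightarrow> (\<exists>u\<in>R. qmult m Lam d u = qone))"

definition qfactor :: "(nat \<Rightarrow> lpoly) \<Rightarrow> nat \<Rightarrow> ivec \<Rightarrow> qelem" where
  "qfactor xi s f = (\<lambda>c a. \<Sum>r\<in>{0..s}. if c = (\<lambda>k. int r * f k) then xi r a else 0)"

primrec qprod :: "nat \<Rightarrow> (nat \<Rightarrow> nat \<Rightarrow> int) \<Rightarrow> (nat \<Rightarrow> qelem) \<Rightarrow> nat list \<Rightarrow> qelem" where
  "qprod m Lam F [] = qone"
| "qprod m Lam F (l # ls) = qmult m Lam (F l) (qprod m Lam F ls)"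

definition compatible_pair :: "nat \<Rightarrow> nat \<Rightarrow> (nat \<Rightarrow> nat \<Rightarrow> int) \<Rightarrow> (nat \<Rightarrow> nat \<Rightarrow> int) \<Rightarrow> bool" where
  "compatible_pair m n Lam B \<longleftrightarrow>
     (\<forall>k\<in>{1..m}. \<forall>l\<in>{1..m}. Lam k l = - Lam l k) \<and>
     (\<exists>dt :: nat \<Rightarrow> int. (\<forall>l\<in>{1..n}. dt l > 0) \<and>
        (\<forall>k\<in>{1..m}. \<forall>l\<in>{1..n}. (\<Sum>p\<in>{1..m}. Lam k p * B p l) = (if k = l then - dt l else 0)))"

text \<open>Quantum seed data (the map X is the fixed quantum torus basis c \<mapsto> X(c)).\<close>
definition quantum_seed :: "nat \<Rightarrow> nat \<Rightarrow> (nat \<Rightarrow> nat \<Rightarrow> int) \<Rightarrow> (nat \<Rightarrow> nat \<Rightarrow> int)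
     \<Rightarrow> (nat \<Rightarrow> nat) \<Rightarrow> (nat \<Rightarrow> nat \<Rightarrow> lpoly) \<Rightarrow> bool" where
  "quantum_seed m n Lam B d h \<longleftrightarrow>
     compatible_pair m n Lam B \<and>
     (\<forall>k\<in>{1..n}. d k > 0 \<and> (\<forall>p\<in>{1..m}. int (d k) dvd B p k)) \<and>
     (\<forall>k\<in>{1..n}. (\<forall>r\<in>{0..d k}. is_lpoly (h k r) \<and> h k r = h k (d k - r))
        \<and> h k 0 = lp_one \<and> h k (d k) = lp_one)"

end

theory Submission
  imports Defs "HOL-Library.List_Lexorder"
begin

definition qval :: "qelem \<Rightarrow> ivec \<times> int \<Rightarrow> int" where
  "qval P z = P (fst z) (snd z)"

definition oplus :: "nat \<Rightarrow> (nat \<Rightarrow> nat \<Rightarrow> int) \<Rightarrow> ivec \<times> int \<Rightarrow> ivec \<times> int \<Rightarrow> ivec \<times> int" where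
  "oplus m Lam x y = ((\<lambda>k. fst x k + fst y k), snd x + snd y + bil m Lam (fst x) (fst y))"

lemma qsupp_iff: "z \<in> qsupp P \<longleftrightarrow> qval P z \<noteq> 0"
  by (cases z) (simp add: qsupp_def qval_def)

lemma qmult_sum: "qmult m Lam P Q e a =
  (\<Sum>x\<in>qsupp P. \<Sum>y\<in>qsupp Q. if oplus m Lam x y = (e,a) then qval P x * qval Q y else 0)"
  unfolding qmult_def oplus_def qval_def by (simp add: split_def)

lemma qval_qmult: "qval (qmult m Lam P Q) z =
  (\<Sum>x\<in>qsupp P. \<Sum>y\<in>qsupp Q. if oplus m Lam x y = z then qval P x * qval Q y else 0)"
  by (cases z) (simp add: qval_def qmult_sum)

lemma oplus_cancel1: "oplus m Lam x y = oplus m Lam x y' \<Longrightarrow> y = y'"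
proof -
  assume h: "oplus m Lam x y = oplus m Lam x y'"
  hence "fst (oplus m Lam x y) = fst (oplus m Lam x y')" by simp
  hence "\<And>k. fst x k + fst y k = fst x k + fst y' k" unfolding oplus_def by (simp add: fun_eq_iff)
  hence c: "fst y = fst y'" by auto
  with h have "snd y = snd y'" unfolding oplus_def by simp
  with c show ?thesis by (simp add: prod_eq_iff)
qed

lemma oplus_cancel2: "oplus m Lam x y = oplus m Lam x' y \<Longrightarrow> x = x'"
proof -
  assume h: "oplus m Lam x y = oplus m Lam x' y"
  hence "fst (oplus m Lam x y) = fst (oplus m Lam x' y)" by simp
  hence "\<And>k. fst x k + fst y k = fst x' k + fst y k" unfolding oplus_def by (simp add: fun_eq_iff)
  hence c: "fst x = fst x'" by auto
  with h have "snd x = snd x'" unfolding oplus_def by simp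
  with c show ?thesis by (simp add: prod_eq_iff)
qed

lemma qval_qmult_single:
  assumes "x0 \<in> qsupp P" "y0 \<in> qsupp Q"
    and "\<And>x y. x \<in> qsupp P \<Longrightarrow> y \<in> qsupp Q \<Longrightarrow> oplus m Lam x y = oplus m Lam x0 y0 \<Longrightarrow> x = x0 \<and> y = y0"
    and "finite (qsupp P)" "finite (qsupp Q)"
  shows "qval (qmult m Lam P Q) (oplus m Lam x0 y0) = qval P x0 * qval Q y0"
proof -
  have "qval (qmult m Lam P Q) (oplus m Lam x0 y0) =
     (\<Sum>x\<in>qsupp P. \<Sum>y\<in>qsupp Q. if x = x0 then (if y = y0 then qval P x * qval Q y else 0) else 0)"
    unfolding qval_qmult
  proof (rule sum.cong[OF refl], rule sum.cong[OF refl])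
    fix x y assume xy: "x \<in> qsupp P" "y \<in> qsupp Q"
    show "(if oplus m Lam x y = oplus m Lam x0 y0 then qval P x * qval Q y else 0) =
      (if x = x0 then (if y = y0 then qval P x * qval Q y else 0) else 0)"
    proof (cases "x = x0 \<and> y = y0")
      case True thus ?thesis by simp
    next
      case False
      hence "oplus m Lam x y \<noteq> oplus m Lam x0 y0" using assms(3)[OF xy] by blast
      with False show ?thesis by auto
    qed
  qed
  also have "\<dots> = (\<Sum>x\<in>qsupp P. if x = x0 then qval P x * qval Q y0 else 0)"
  proof (rule sum.cong[OF refl])
    fix x assume "x \<in> qsupp P"
    show "(\<Sum>y\<in>qsupp Q. if x = x0 then (if y = y0 then qval P x * qval Q y else 0) else 0) =
       (if x = x0 then qval P x * qval Q y0 else 0)"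
      using assms(2,5) by (cases "x = x0") (simp_all add: sum.delta')
  qed
  also have "\<dots> = qval P x0 * qval Q y0"
    using assms(1,4) by (simp add: sum.delta')
  finally show ?thesis .
qed

lemma qsupp_qmult: "z \<in> qsupp (qmult m Lam P Q) \<Longrightarrow> \<exists>x\<in>qsupp P. \<exists>y\<in>qsupp Q. oplus m Lam x y = z"
proof (rule ccontr)
  assume a: "z \<in> qsupp (qmult m Lam P Q)" and "\<not> (\<exists>x\<in>qsupp P. \<exists>y\<in>qsupp Q. oplus m Lam x y = z)"
  hence "qval (qmult m Lam P Q) z = 0" unfolding qval_qmult
    by (intro sum.neutral ballI) auto
  with a show False by (simp add: qsupp_iff)
qed

lemma qsupp_qmult_sub: "qsupp (qmult m Lam P Q) \<subseteq> (\<lambda>(x,y). oplus m Lam x y) ` (qsupp P \<times> qsupp Q)"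
proof
  fix z assume "z \<in> qsupp (qmult m Lam P Q)"
  then obtain x y where "x \<in> qsupp P" "y \<in> qsupp Q" "oplus m Lam x y = z" using qsupp_qmult by blast
  thus "z \<in> (\<lambda>(x,y). oplus m Lam x y) ` (qsupp P \<times> qsupp Q)" by force
qed

lemma qtorus_iff: "P \<in> qtorus m \<longleftrightarrow> finite (qsupp P) \<and> (\<forall>z\<in>qsupp P. in_Zm m (fst z))"
  unfolding qtorus_def by auto

lemma in_Zm_add: "in_Zm m c \<Longrightarrow> in_Zm m d \<Longrightarrow> in_Zm m (\<lambda>k. c k + d k)"
  unfolding in_Zm_def by auto

lemma qmult_qtorus: "P \<in> qtorus m \<Longrightarrow> Q \<in> qtorus m \<Longrightarrow> qmult m Lam P Q \<in> qtorus m"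
proof -
  assume P: "P \<in> qtorus m" and Q: "Q \<in> qtorus m"
  have f: "finite (qsupp (qmult m Lam P Q))"
    by (rule finite_subset[OF qsupp_qmult_sub]) (use P Q in \<open>auto simp: qtorus_iff\<close>)
  have "\<forall>z\<in>qsupp (qmult m Lam P Q). in_Zm m (fst z)"
  proof
    fix z assume "z \<in> qsupp (qmult m Lam P Q)"
    then obtain x y where "x \<in> qsupp P" "y \<in> qsupp Q" "oplus m Lam x y = z" using qsupp_qmult by blast
    thus "in_Zm m (fst z)" using P Q unfolding qtorus_iff oplus_def by (auto intro!: in_Zm_add)
  qed
  with f show ?thesis by (simp add: qtorus_iff)
qed

lemma qmult_zero_left: "qsupp P = {} \<Longrightarrow> qmult m Lam P Q = (\<lambda>_ _. 0)"
  unfolding qmult_def by simp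

lemma qsupp_empty_iff: "qsupp P = {} \<longleftrightarrow> P = (\<lambda>_ _. 0)"
  unfolding qsupp_def fun_eq_iff by auto

definition keyok :: "nat \<Rightarrow> (nat \<Rightarrow> nat \<Rightarrow> int) \<Rightarrow> (ivec \<times> int \<Rightarrow> 'k::linorder) \<Rightarrow> bool" where
  "keyok m Lam K \<longleftrightarrow>
    (\<forall>p q. in_Zm m (fst p) \<longrightarrow> in_Zm m (fst q) \<longrightarrow> K p = K q \<longrightarrow> p = q) \<and>
    (\<forall>p p' q. in_Zm m (fst p) \<longrightarrow> in_Zm m (fst p') \<longrightarrow> in_Zm m (fst q) \<longrightarrow> K p < K p' \<longrightarrow>
        K (oplus m Lam p q) < K (oplus m Lam p' q) \<and> K (oplus m Lam q p) < K (oplus m Lam q p'))"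

definition topK :: "(ivec \<times> int \<Rightarrow> 'k::linorder) \<Rightarrow> qelem \<Rightarrow> ivec \<times> int" where
  "topK K P = (THE p. p \<in> qsupp P \<and> (\<forall>q\<in>qsupp P. K q \<le> K p))"

lemma keyok_inj: "keyok m Lam K \<Longrightarrow> in_Zm m (fst p) \<Longrightarrow> in_Zm m (fst q) \<Longrightarrow> K p = K q \<Longrightarrow> p = q"
  unfolding keyok_def by blast

lemma keyok_mono1: "keyok m Lam K \<Longrightarrow> in_Zm m (fst p) \<Longrightarrow> in_Zm m (fst p') \<Longrightarrow> in_Zm m (fst q) \<Longrightarrow>
   K p < K p' \<Longrightarrow> K (oplus m Lam p q) < K (oplus m Lam p' q)"
  unfolding keyok_def by blast

lemma keyok_mono2: "keyok m Lam K \<Longrightarrow> in_Zm m (fst p) \<Longrightarrow> in_Zm m (fst p') \<Longrightarrow> in_Zm m (fst q) \<Longrightarrow>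
   K p < K p' \<Longrightarrow> K (oplus m Lam q p) < K (oplus m Lam q p')"
  unfolding keyok_def by blast

lemma qtorus_Zm: "P \<in> qtorus m \<Longrightarrow> z \<in> qsupp P \<Longrightarrow> in_Zm m (fst z)"
  unfolding qtorus_iff by blast

lemma top_ex1:
  assumes K: "keyok m Lam K" and P: "P \<in> qtorus m" and ne: "qsupp P \<noteq> {}"
  shows "\<exists>!p. p \<in> qsupp P \<and> (\<forall>q\<in>qsupp P. K q \<le> K p)"
proof -
  have fin: "finite (qsupp P)" using P by (simp add: qtorus_iff)
  define M where "M = Max (K ` qsupp P)"
  have "M \<in> K ` qsupp P" unfolding M_def using fin ne by (intro Max_in) auto
  then obtain p where p: "p \<in> qsupp P" "K p = M" by blast
  have all: "\<forall>q\<in>qsupp P. K q \<le> K p" using p fin unfolding M_def by auto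
  show ?thesis
  proof (rule ex1I[of _ p])
    show "p \<in> qsupp P \<and> (\<forall>q\<in>qsupp P. K q \<le> K p)" using p all by blast
  next
    fix p' assume h: "p' \<in> qsupp P \<and> (\<forall>q\<in>qsupp P. K q \<le> K p')"
    hence "K p' = K p" using all p by (meson antisym)
    thus "p' = p" using keyok_inj[OF K] qtorus_Zm[OF P] h p by blast
  qed
qed

lemma top_prop:
  assumes "keyok m Lam K" "P \<in> qtorus m" "qsupp P \<noteq> {}"
  shows "topK K P \<in> qsupp P" "\<And>q. q \<in> qsupp P \<Longrightarrow> K q \<le> K (topK K P)"
proof -
  have "topK K P \<in> qsupp P \<and> (\<forall>q\<in>qsupp P. K q \<le> K (topK K P))"
    unfolding topK_def by (rule theI'[OF top_ex1[OF assms]])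
  thus "topK K P \<in> qsupp P" "\<And>q. q \<in> qsupp P \<Longrightarrow> K q \<le> K (topK K P)" by auto
qed

lemma top_unique:
  assumes "keyok m Lam K" "P \<in> qtorus m" "p \<in> qsupp P" "\<And>q. q \<in> qsupp P \<Longrightarrow> K q \<le> K p"
  shows "topK K P = p"
proof -
  have ne: "qsupp P \<noteq> {}" using assms(3) by blast
  show ?thesis unfolding topK_def
    by (rule the1_equality[OF top_ex1[OF assms(1,2) ne]]) (use assms in blast)
qed

lemma top_lt:
  assumes K: "keyok m Lam K" and P: "P \<in> qtorus m" and q: "q \<in> qsupp P" and ne: "q \<noteq> topK K P"
  shows "K q < K (topK K P)"
proof -
  have ne': "qsupp P \<noteq> {}" using q by blast
  have le: "K q \<le> K (topK K P)" using top_prop(2)[OF K P ne' q] .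
  have "K q \<noteq> K (topK K P)"
    using keyok_inj[OF K] qtorus_Zm[OF P q] qtorus_Zm[OF P top_prop(1)[OF K P ne']] ne by blast
  with le show ?thesis by simp
qed

lemma top_mult:
  assumes K: "keyok m Lam K" and P: "P \<in> qtorus m" and Q: "Q \<in> qtorus m"
    and neP: "qsupp P \<noteq> {}" and neQ: "qsupp Q \<noteq> {}"
  shows "qsupp (qmult m Lam P Q) \<noteq> {}"
    "topK K (qmult m Lam P Q) = oplus m Lam (topK K P) (topK K Q)"
    "qval (qmult m Lam P Q) (oplus m Lam (topK K P) (topK K Q)) = qval P (topK K P) * qval Q (topK K Q)"
proof -
  define p where "p = topK K P"
  define q where "q = topK K Q"
  have p: "p \<in> qsupp P" unfolding p_def by (rule top_prop(1)[OF K P neP])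
  have q: "q \<in> qsupp Q" unfolding q_def by (rule top_prop(1)[OF K Q neQ])
  have pZ: "in_Zm m (fst p)" by (rule qtorus_Zm[OF P p])
  have qZ: "in_Zm m (fst q)" by (rule qtorus_Zm[OF Q q])
  have lt: "K (oplus m Lam x y) < K (oplus m Lam p q)"
    if x: "x \<in> qsupp P" and y: "y \<in> qsupp Q" and ne: "\<not> (x = p \<and> y = q)" for x y
  proof -
    have xZ: "in_Zm m (fst x)" by (rule qtorus_Zm[OF P x])
    have yZ: "in_Zm m (fst y)" by (rule qtorus_Zm[OF Q y])
    show ?thesis
    proof (cases "x = p")
      case True
      hence "y \<noteq> q" using ne by blast
      hence "K y < K q" using top_lt[OF K Q y] q_def by simp
      hence "K (oplus m Lam p y) < K (oplus m Lam p q)" by (rule keyok_mono2[OF K yZ qZ pZ])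
      thus ?thesis using True by simp
    next
      case False
      hence "K x < K p" using top_lt[OF K P x] p_def by simp
      hence 1: "K (oplus m Lam x y) < K (oplus m Lam p y)" by (rule keyok_mono1[OF K xZ pZ yZ])
      have "K (oplus m Lam p y) \<le> K (oplus m Lam p q)"
      proof (cases "y = q")
        case True thus ?thesis by simp
      next
        case False
        hence "K y < K q" using top_lt[OF K Q y] q_def by simp
        thus ?thesis using keyok_mono2[OF K yZ qZ pZ] by (simp add: less_imp_le)
      qed
      with 1 show ?thesis by simp
    qed
  qed
  have fP: "finite (qsupp P)" and fQ: "finite (qsupp Q)" using P Q by (auto simp: qtorus_iff)
  have val: "qval (qmult m Lam P Q) (oplus m Lam p q) = qval P p * qval Q q"
  proof (rule qval_qmult_single[OF p q _ fP fQ])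
    fix x y assume "x \<in> qsupp P" "y \<in> qsupp Q" "oplus m Lam x y = oplus m Lam p q"
    thus "x = p \<and> y = q" using lt by fastforce
  qed
  have nz: "qval P p * qval Q q \<noteq> 0" using p q by (simp add: qsupp_iff)
  have inS: "oplus m Lam p q \<in> qsupp (qmult m Lam P Q)" using val nz by (simp add: qsupp_iff)
  thus "qsupp (qmult m Lam P Q) \<noteq> {}" by blast
  have "topK K (qmult m Lam P Q) = oplus m Lam p q"
  proof (rule top_unique[OF K qmult_qtorus[OF P Q] inS])
    fix z assume "z \<in> qsupp (qmult m Lam P Q)"
    then obtain x y where xy: "x \<in> qsupp P" "y \<in> qsupp Q" "oplus m Lam x y = z" using qsupp_qmult by blast
    show "K z \<le> K (oplus m Lam p q)"
    proof (cases "x = p \<and> y = q")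
      case True thus ?thesis using xy by simp
    next
      case False thus ?thesis using lt[OF xy(1,2)] xy(3) by simp
    qed
  qed
  thus "topK K (qmult m Lam P Q) = oplus m Lam (topK K P) (topK K Q)" using p_def q_def by simp
  show "qval (qmult m Lam P Q) (oplus m Lam (topK K P) (topK K Q)) = qval P (topK K P) * qval Q (topK K Q)"
    using val p_def q_def by simp
qed

lemma list_add_mono:
  fixes xs ys zs :: "int list"
  shows "length xs = length ys \<Longrightarrow> length ys = length zs \<Longrightarrow> xs < ys \<Longrightarrow>
    map2 (+) xs zs < map2 (+) ys zs"
proof (induction xs arbitrary: ys zs)
  case Nil thus ?case by simp
next
  case (Cons x xs)
  then obtain y ys' z zs' where ys: "ys = y # ys'" and zs: "zs = z # zs'"
    by (metis length_Suc_conv)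
  show ?case using Cons.prems Cons.IH[of ys' zs'] unfolding ys zs by auto
qed

lemma map2_add_comm: "map2 (+) (xs::int list) ys = map2 (+) ys xs"
  by (induction xs arbitrary: ys) (auto simp: zip_Cons1 split: list.split)

lemma list_app_less:
  fixes xs ys :: "int list"
  shows "length xs = length ys \<Longrightarrow> (xs @ [x] < ys @ [y]) \<longleftrightarrow> (xs < ys \<or> xs = ys \<and> x < y)"
proof (induction xs arbitrary: ys)
  case Nil thus ?case by simp
next
  case (Cons a xs)
  then obtain b ys' where ys: "ys = b # ys'" by (metis length_Suc_conv)
  show ?case using Cons.prems Cons.IH[of ys'] unfolding ys by auto
qed

definition ckey :: "nat \<Rightarrow> (ivec \<Rightarrow> int) \<Rightarrow> int \<Rightarrow> ivec \<Rightarrow> int list" where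
  "ckey m w \<sigma> c = w c # map (\<lambda>k. \<sigma> * c k) [1..<m+1]"

definition key :: "nat \<Rightarrow> (ivec \<Rightarrow> int) \<Rightarrow> int \<Rightarrow> int \<Rightarrow> ivec \<times> int \<Rightarrow> int list" where
  "key m w \<sigma> \<rho> p = ckey m w \<sigma> (fst p) @ [\<rho> * snd p]"

lemma length_ckey[simp]: "length (ckey m w \<sigma> c) = m + 1"
  by (simp add: ckey_def)

lemma map2_map: "map2 (+) (map f xs) (map g xs) = map (\<lambda>x. (f x::int) + g x) xs"
  by (induction xs) auto

definition additive :: "(ivec \<Rightarrow> int) \<Rightarrow> bool" where
  "additive w \<longleftrightarrow> (\<forall>c d. w (\<lambda>k. c k + d k) = w c + w d)"

lemma ckey_add: "additive w \<Longrightarrow> ckey m w \<sigma> (\<lambda>k. c k + d k) = map2 (+) (ckey m w \<sigma> c) (ckey m w \<sigma> d)"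
  unfolding ckey_def additive_def by (simp add: map2_map ring_distribs)

lemma ckey_inj: "\<sigma> \<noteq> 0 \<Longrightarrow> in_Zm m c \<Longrightarrow> in_Zm m d \<Longrightarrow> ckey m w \<sigma> c = ckey m w \<sigma> d \<Longrightarrow> c = d"
proof -
  assume s: "\<sigma> \<noteq> 0" and c: "in_Zm m c" and d: "in_Zm m d" and e: "ckey m w \<sigma> c = ckey m w \<sigma> d"
  hence "map (\<lambda>k. \<sigma> * c k) [1..<m+1] = map (\<lambda>k. \<sigma> * d k) [1..<m+1]" by (simp add: ckey_def)
  hence h: "\<forall>k\<in>set [1..<m+1]. \<sigma> * c k = \<sigma> * d k" by (simp only: map_eq_conv)
  have "\<forall>k\<in>{1..m}. c k = d k"
  proof
    fix k assume "k \<in> {1..m}"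
    hence "k \<in> set [1..<m+1]" by auto
    with h s show "c k = d k" by auto
  qed
  moreover have "\<forall>k. k \<notin> {1..m} \<longrightarrow> c k = d k" using c d by (simp add: in_Zm_def)
  ultimately show "c = d" by blast
qed

lemma key_keyok:
  assumes w: "additive w" and s: "\<sigma> \<noteq> 0" and r: "\<rho> \<noteq> 0"
  shows "keyok m Lam (key m w \<sigma> \<rho>)"
  unfolding keyok_def
proof (rule conjI; intro allI impI)
  fix p q :: "ivec \<times> int" assume pZ: "in_Zm m (fst p)" and qZ: "in_Zm m (fst q)" and e: "key m w \<sigma> \<rho> p = key m w \<sigma> \<rho> q"
  hence "ckey m w \<sigma> (fst p) = ckey m w \<sigma> (fst q)" and "\<rho> * snd p = \<rho> * snd q"
    by (simp_all add: key_def)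
  thus "p = q" using ckey_inj[OF s pZ qZ] r by (simp add: prod_eq_iff)
next
  fix p p' q :: "ivec \<times> int" assume pZ: "in_Zm m (fst p)" and p'Z: "in_Zm m (fst p')" and qZ: "in_Zm m (fst q)"
    and lt: "key m w \<sigma> \<rho> p < key m w \<sigma> \<rho> p'"
  have lt': "ckey m w \<sigma> (fst p) < ckey m w \<sigma> (fst p') \<or>
     (ckey m w \<sigma> (fst p) = ckey m w \<sigma> (fst p') \<and> \<rho> * snd p < \<rho> * snd p')"
    using lt by (simp add: key_def list_app_less)
  show "key m w \<sigma> \<rho> (oplus m Lam p q) < key m w \<sigma> \<rho> (oplus m Lam p' q) \<and>
        key m w \<sigma> \<rho> (oplus m Lam q p) < key m w \<sigma> \<rho> (oplus m Lam q p')"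
  proof (cases "ckey m w \<sigma> (fst p) < ckey m w \<sigma> (fst p')")
    case True
    have 1: "ckey m w \<sigma> (fst (oplus m Lam p q)) < ckey m w \<sigma> (fst (oplus m Lam p' q))"
      unfolding oplus_def using True by (simp add: ckey_add[OF w] list_add_mono)
    have 2: "ckey m w \<sigma> (fst (oplus m Lam q p)) < ckey m w \<sigma> (fst (oplus m Lam q p'))"
      unfolding oplus_def using True
      by (simp add: ckey_add[OF w] map2_add_comm[of "ckey m w \<sigma> (fst q)"] list_add_mono)
    show ?thesis using 1 2 by (simp add: key_def list_app_less)
  next
    case False
    hence e: "ckey m w \<sigma> (fst p) = ckey m w \<sigma> (fst p')" and a: "\<rho> * snd p < \<rho> * snd p'" using lt' by auto
    have c: "fst p = fst p'" by (rule ckey_inj[OF s pZ p'Z e])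
    have 1: "\<rho> * snd (oplus m Lam p q) < \<rho> * snd (oplus m Lam p' q)"
      using a c unfolding oplus_def by (simp add: ring_distribs)
    have 2: "\<rho> * snd (oplus m Lam q p) < \<rho> * snd (oplus m Lam q p')"
      using a c unfolding oplus_def by (simp add: ring_distribs)
    have 3: "fst (oplus m Lam p q) = fst (oplus m Lam p' q)" "fst (oplus m Lam q p) = fst (oplus m Lam q p')"
      using c unfolding oplus_def by simp_all
    show ?thesis using 1 2 3 by (simp add: key_def list_app_less)
  qed
qed

definition vmul :: "nat \<Rightarrow> ivec \<Rightarrow> ivec" where
  "vmul r f = (\<lambda>k. int r * f k)"

lemma qfactor_alt: "qfactor xi s f = (\<lambda>c a. \<Sum>r\<in>{0..s}. if c = vmul r f then xi r a else 0)"
  unfolding qfactor_def vmul_def by simp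

lemma qfactor_supp:
  assumes "z \<in> qsupp (qfactor xi s f)"
  shows "\<exists>r\<in>{0..s}. fst z = vmul r f \<and> xi r (snd z) \<noteq> 0"
proof (rule ccontr)
  assume "\<not> ?thesis"
  hence "qval (qfactor xi s f) z = 0" unfolding qval_def qfactor_alt
    by (intro sum.neutral ballI) auto
  with assms show False by (simp add: qsupp_iff)
qed

lemma vmul_inj: "f kk \<noteq> 0 \<Longrightarrow> vmul r f = vmul r' f \<Longrightarrow> r = r'"
  unfolding vmul_def by (metis mult_cancel_right of_nat_eq_iff)

lemma qfactor_val:
  assumes "f kk \<noteq> 0" "rr \<le> s"
  shows "qval (qfactor xi s f) (vmul rr f, a) = xi rr a"
proof -
  have "qval (qfactor xi s f) (vmul rr f, a) = (\<Sum>r\<in>{0..s}. if r = rr then xi r a else 0)"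
    unfolding qval_def qfactor_alt
    by (rule sum.cong[OF refl]) (use vmul_inj[where f=f and kk=kk, OF assms(1)] in auto)
  also have "\<dots> = xi rr a" using assms(2) by (simp add: sum.delta')
  finally show ?thesis .
qed

lemma in_Zm_vmul: "in_Zm m f \<Longrightarrow> in_Zm m (vmul r f)"
  unfolding in_Zm_def vmul_def by simp

lemma qfactor_qtorus:
  assumes f: "in_Zm m f" and xi: "\<forall>r. is_lpoly (xi r)"
  shows "qfactor xi s f \<in> qtorus m"
proof -
  have sub: "qsupp (qfactor xi s f) \<subseteq> (\<Union>r\<in>{0..s}. (\<lambda>a. (vmul r f, a)) ` {a. xi r a \<noteq> 0})"
  proof
    fix z assume "z \<in> qsupp (qfactor xi s f)"
    from qfactor_supp[OF this] obtain r where r: "r \<in> {0..s}" "fst z = vmul r f" "xi r (snd z) \<noteq> 0" by blast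
    hence "z = (vmul r f, snd z)" by (simp add: prod_eq_iff)
    with r show "z \<in> (\<Union>r\<in>{0..s}. (\<lambda>a. (vmul r f, a)) ` {a. xi r a \<noteq> 0})" by blast
  qed
  have "finite (\<Union>r\<in>{0..s}. (\<lambda>a. (vmul r f, a)) ` {a. xi r a \<noteq> 0})"
    using xi by (auto simp: is_lpoly_def)
  hence fin: "finite (qsupp (qfactor xi s f))" using sub finite_subset by blast
  have "\<forall>z\<in>qsupp (qfactor xi s f). in_Zm m (fst z)"
    using qfactor_supp in_Zm_vmul[OF f] by fastforce
  with fin show ?thesis by (simp add: qtorus_iff)
qed

lemma qone_val: "qval qone z = (if z = ((\<lambda>_. 0), 0) then 1 else 0)"
  by (cases z) (simp add: qval_def qone_def qX_def qmonom_def lp_one_def)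

lemma qsupp_qone: "qsupp qone = {((\<lambda>_. 0), 0)}"
  by (auto simp: qsupp_iff qone_val split: if_splits)

lemma qone_qtorus: "qone \<in> qtorus m"
  by (simp add: qtorus_iff qsupp_qone in_Zm_def)

lemma vmul_add: "(\<lambda>k. vmul r f k + vmul r' f k) = vmul (r + r') f"
  unfolding vmul_def by (simp add: fun_eq_iff ring_distribs)

lemma qprod_basic:
  assumes f: "in_Zm m f" and k0: "f k0 \<noteq> 0" and xi: "\<forall>l r. is_lpoly (xi l r)"
    and top1: "\<forall>l\<in>set ls. xi l (s l) = lp_one"
  shows "qprod m Lam (\<lambda>l. qfactor (xi l) (s l) f) ls \<in> qtorus m \<and>
         qsupp (qprod m Lam (\<lambda>l. qfactor (xi l) (s l) f) ls) \<noteq> {} \<and>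
         (\<forall>z\<in>qsupp (qprod m Lam (\<lambda>l. qfactor (xi l) (s l) f) ls). \<exists>r. fst z = vmul r f)"
  using top1
proof (induction ls)
  case Nil
  have "fst ((\<lambda>_. 0::int), 0::int) = vmul 0 f" by (simp add: vmul_def)
  thus ?case by (auto simp: qone_qtorus qsupp_qone)
next
  case (Cons l ls)
  let ?F = "qfactor (xi l) (s l) f"
  let ?R = "qprod m Lam (\<lambda>l. qfactor (xi l) (s l) f) ls"
  have IH: "?R \<in> qtorus m" "qsupp ?R \<noteq> {}" "\<forall>z\<in>qsupp ?R. \<exists>r. fst z = vmul r f"
    using Cons by auto
  have F: "?F \<in> qtorus m" using qfactor_qtorus[OF f] xi by blast
  have "qval ?F (vmul (s l) f, 0) = 1"
    using qfactor_val[where f=f and kk=k0 and rr="s l" and s="s l" and xi="xi l" and a=0, OF k0] Cons.prems by (simp add: lp_one_def)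
  hence "(vmul (s l) f, 0) \<in> qsupp ?F" by (simp add: qsupp_iff)
  hence Fne: "qsupp ?F \<noteq> {}" by blast
  have K: "keyok m Lam (key m (\<lambda>_. 0) 1 1)" by (rule key_keyok) (auto simp: additive_def)
  have "qsupp (qmult m Lam ?F ?R) \<noteq> {}" by (rule top_mult(1)[OF K F IH(1) Fne IH(2)])
  moreover have "qmult m Lam ?F ?R \<in> qtorus m" by (rule qmult_qtorus[OF F IH(1)])
  moreover have "\<forall>z\<in>qsupp (qmult m Lam ?F ?R). \<exists>r. fst z = vmul r f"
  proof
    fix z assume "z \<in> qsupp (qmult m Lam ?F ?R)"
    then obtain x y where xy: "x \<in> qsupp ?F" "y \<in> qsupp ?R" "oplus m Lam x y = z" using qsupp_qmult by blast
    obtain r1 where r1: "fst x = vmul r1 f" using qfactor_supp[OF xy(1)] by blast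
    obtain r2 where r2: "fst y = vmul r2 f" using IH(3) xy(2) by blast
    have "fst z = vmul (r1 + r2) f" using xy(3) r1 r2 vmul_add[of r1 f r2] by (auto simp: oplus_def)
    thus "\<exists>r. fst z = vmul r f" by blast
  qed
  ultimately show ?case by simp
qed

lemma additive_zero: "additive (\<lambda>_. 0)" by (simp add: additive_def)

lemma ck_step:
  assumes "ckey m (\<lambda>_. 0) \<sigma> (\<lambda>_. 0) < ckey m (\<lambda>_. 0) \<sigma> f"
  shows "ckey m (\<lambda>_. 0) \<sigma> c < ckey m (\<lambda>_. 0) \<sigma> (\<lambda>k. c k + f k)"
proof -
  have 1: "map2 (+) (ckey m (\<lambda>_. 0) \<sigma> (\<lambda>_. 0)) (ckey m (\<lambda>_. 0) \<sigma> c) <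
        map2 (+) (ckey m (\<lambda>_. 0) \<sigma> f) (ckey m (\<lambda>_. 0) \<sigma> c)"
    by (rule list_add_mono) (simp_all only: length_ckey assms)
  have 2: "ckey m (\<lambda>_. 0) \<sigma> (\<lambda>k. 0 + c k) = map2 (+) (ckey m (\<lambda>_. 0) \<sigma> (\<lambda>_. 0)) (ckey m (\<lambda>_. 0) \<sigma> c)"
    by (rule ckey_add[OF additive_zero])
  have 3: "ckey m (\<lambda>_. 0) \<sigma> (\<lambda>k. c k + f k) = map2 (+) (ckey m (\<lambda>_. 0) \<sigma> c) (ckey m (\<lambda>_. 0) \<sigma> f)"
    by (rule ckey_add[OF additive_zero])
  have 4: "(\<lambda>k. 0 + c k) = c" by simp
  show ?thesis using 1 unfolding 3 map2_add_comm[of "ckey m (\<lambda>_. 0) \<sigma> c"] 2[symmetric] 4 .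
qed

lemma ck_lt_Suc:
  assumes "ckey m (\<lambda>_. 0) \<sigma> (\<lambda>_. 0) < ckey m (\<lambda>_. 0) \<sigma> f"
  shows "ckey m (\<lambda>_. 0) \<sigma> (vmul r f) < ckey m (\<lambda>_. 0) \<sigma> (vmul (r + Suc t) f)"
proof (induction t)
  case 0
  have "(\<lambda>k. vmul r f k + f k) = vmul (r + Suc 0) f" unfolding vmul_def by (simp add: fun_eq_iff ring_distribs)
  thus ?case using ck_step[OF assms, of "vmul r f"] by simp
next
  case (Suc t)
  have "(\<lambda>k. vmul (r + Suc t) f k + f k) = vmul (r + Suc (Suc t)) f" unfolding vmul_def by (simp add: fun_eq_iff ring_distribs)
  hence "ckey m (\<lambda>_. 0) \<sigma> (vmul (r + Suc t) f) < ckey m (\<lambda>_. 0) \<sigma> (vmul (r + Suc (Suc t)) f)"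
    using ck_step[OF assms, of "vmul (r + Suc t) f"] by simp
  with Suc show ?case by simp
qed

lemma ck_lt:
  assumes "ckey m (\<lambda>_. 0) \<sigma> (\<lambda>_. 0) < ckey m (\<lambda>_. 0) \<sigma> f" "r < r'"
  shows "ckey m (\<lambda>_. 0) \<sigma> (vmul r f) < ckey m (\<lambda>_. 0) \<sigma> (vmul r' f)"
proof -
  obtain t where "r' = r + Suc t" using assms(2) less_iff_Suc_add by auto
  thus ?thesis using ck_lt_Suc[OF assms(1)] by simp
qed

lemma list_neg_less:
  fixes xs ys :: "int list"
  shows "length xs = length ys \<Longrightarrow> (map uminus xs < map uminus ys) \<longleftrightarrow> ys < xs"
proof (induction xs arbitrary: ys)
  case Nil thus ?case by simp
next
  case (Cons a xs)
  then obtain b ys' where ys: "ys = b # ys'" by (metis length_Suc_conv)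
  show ?case using Cons.prems Cons.IH[of ys'] unfolding ys by auto
qed

lemma orient_ex:
  assumes f: "in_Zm m f" and k0: "f k0 \<noteq> 0"
  shows "\<exists>\<sigma>. (\<sigma> = 1 \<or> \<sigma> = -1) \<and> ckey m (\<lambda>_. 0) \<sigma> (\<lambda>_. 0) < ckey m (\<lambda>_. 0) \<sigma> f"
proof -
  have z: "in_Zm m (\<lambda>_. 0)" by (simp add: in_Zm_def)
  have "f \<noteq> (\<lambda>_. 0)" using k0 by auto
  hence ne: "ckey m (\<lambda>_. 0) 1 (\<lambda>_. 0) \<noteq> ckey m (\<lambda>_. 0) 1 f"
    using ckey_inj[OF one_neq_zero z f] by blast
  have neg: "ckey m (\<lambda>_. 0) (-1) c = map uminus (ckey m (\<lambda>_. 0) 1 c)" for c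
    by (simp add: ckey_def)
  show ?thesis
  proof (cases "ckey m (\<lambda>_. 0) 1 (\<lambda>_. 0) < ckey m (\<lambda>_. 0) 1 f")
    case True thus ?thesis by blast
  next
    case False
    hence "ckey m (\<lambda>_. 0) 1 f < ckey m (\<lambda>_. 0) 1 (\<lambda>_. 0)" using ne by simp
    hence "ckey m (\<lambda>_. 0) (-1) (\<lambda>_. 0) < ckey m (\<lambda>_. 0) (-1) f"
      unfolding neg by (subst list_neg_less) simp_all
    thus ?thesis by blast
  qed
qed

lemma key_keyok0: "\<sigma> \<noteq> 0 \<Longrightarrow> \<rho> \<noteq> 0 \<Longrightarrow> keyok m Lam (key m (\<lambda>_. 0) \<sigma> \<rho>)"
  by (rule key_keyok[OF additive_zero])

lemma factor_top:
  assumes f: "in_Zm m f" and kk: "f kk \<noteq> 0" and xi: "\<forall>r. is_lpoly (xi r)"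
    and xs: "xi s = lp_one" and sig: "\<sigma> \<noteq> 0" and rho: "\<rho> \<noteq> 0"
    and ori: "ckey m (\<lambda>_. 0) \<sigma> (\<lambda>_. 0) < ckey m (\<lambda>_. 0) \<sigma> f"
  shows "topK (key m (\<lambda>_. 0) \<sigma> \<rho>) (qfactor xi s f) = (vmul s f, 0)"
proof (rule top_unique[OF key_keyok0[OF sig rho] qfactor_qtorus[OF f xi]])
  have "qval (qfactor xi s f) (vmul s f, 0) = 1"
    using qfactor_val[where f=f and kk=kk and rr=s and s=s and xi=xi and a=0, OF kk] xs by (simp add: lp_one_def)
  thus "(vmul s f, 0) \<in> qsupp (qfactor xi s f)" by (simp add: qsupp_iff)
  fix q assume q: "q \<in> qsupp (qfactor xi s f)"
  from qfactor_supp[OF q] obtain r where r: "r \<in> {0..s}" "fst q = vmul r f" "xi r (snd q) \<noteq> 0" by blast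
  show "key m (\<lambda>_. 0) \<sigma> \<rho> q \<le> key m (\<lambda>_. 0) \<sigma> \<rho> (vmul s f, 0)"
  proof (cases "r = s")
    case True
    hence "snd q = 0" using r xs by (simp add: lp_one_def split: if_splits)
    hence "q = (vmul s f, 0)" using r True by (simp add: prod_eq_iff)
    thus ?thesis by simp
  next
    case False
    hence "r < s" using r by simp
    hence "ckey m (\<lambda>_. 0) \<sigma> (vmul r f) < ckey m (\<lambda>_. 0) \<sigma> (vmul s f)" by (rule ck_lt[OF ori])
    hence "key m (\<lambda>_. 0) \<sigma> \<rho> q < key m (\<lambda>_. 0) \<sigma> \<rho> (vmul s f, 0)"
      using r by (simp add: key_def list_app_less)
    thus ?thesis by simp
  qed
qed

lemma qone_top: "keyok m Lam K \<Longrightarrow> topK K qone = ((\<lambda>_. 0), 0)"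
  by (rule top_unique[OF _ qone_qtorus]) (auto simp: qsupp_qone)

lemma qprod_top:
  assumes f: "in_Zm m f" and k0: "f k0 \<noteq> 0" and xi: "\<forall>l r. is_lpoly (xi l r)"
    and top1: "\<forall>l\<in>set ls. xi l (s l) = lp_one" and sig: "\<sigma> \<noteq> 0"
    and ori: "ckey m (\<lambda>_. 0) \<sigma> (\<lambda>_. 0) < ckey m (\<lambda>_. 0) \<sigma> f"
  shows "\<exists>T. \<forall>\<rho>\<in>{1,-1}. topK (key m (\<lambda>_. 0) \<sigma> \<rho>) (qprod m Lam (\<lambda>l. qfactor (xi l) (s l) f) ls) = T
            \<and> qval (qprod m Lam (\<lambda>l. qfactor (xi l) (s l) f) ls) T = 1"
  using top1
proof (induction ls)
  case Nil
  show ?case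
  proof (rule exI[of _ "((\<lambda>_. 0), 0)"], intro ballI conjI)
    fix \<rho> :: int assume "\<rho> \<in> {1,-1}"
    hence "\<rho> \<noteq> 0" by auto
    show "topK (key m (\<lambda>_. 0) \<sigma> \<rho>) (qprod m Lam (\<lambda>l. qfactor (xi l) (s l) f) []) = ((\<lambda>_. 0), 0)"
      using qone_top[OF key_keyok0[OF sig \<open>\<rho> \<noteq> 0\<close>]] by simp
    show "qval (qprod m Lam (\<lambda>l. qfactor (xi l) (s l) f) []) ((\<lambda>_. 0), 0) = 1"
      by (simp add: qone_val)
  qed
next
  case (Cons l ls)
  let ?F = "qfactor (xi l) (s l) f"
  let ?R = "qprod m Lam (\<lambda>l. qfactor (xi l) (s l) f) ls"
  obtain T where T: "\<forall>\<rho>\<in>{1,-1}. topK (key m (\<lambda>_. 0) \<sigma> \<rho>) ?R = T \<and> qval ?R T = 1"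
    using Cons by auto
  have R: "?R \<in> qtorus m" "qsupp ?R \<noteq> {}" using qprod_basic[OF f k0 xi] Cons.prems by auto
  have F: "?F \<in> qtorus m" using qfactor_qtorus[OF f] xi by blast
  have xs: "xi l (s l) = lp_one" using Cons.prems by simp
  have "qval ?F (vmul (s l) f, 0) = 1"
    using qfactor_val[where f=f and kk=k0 and rr="s l" and s="s l" and xi="xi l" and a=0, OF k0] xs
    by (simp add: lp_one_def)
  hence "(vmul (s l) f, 0) \<in> qsupp ?F" by (simp add: qsupp_iff)
  hence Fne: "qsupp ?F \<noteq> {}" by blast
  show ?case
  proof (rule exI[of _ "oplus m Lam (vmul (s l) f, 0) T"], intro ballI conjI)
    fix \<rho> :: int assume rho: "\<rho> \<in> {1,-1}"
    hence r0: "\<rho> \<noteq> 0" by auto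
    have K: "keyok m Lam (key m (\<lambda>_. 0) \<sigma> \<rho>)" by (rule key_keyok0[OF sig r0])
    have tF: "topK (key m (\<lambda>_. 0) \<sigma> \<rho>) ?F = (vmul (s l) f, 0)"
      by (rule factor_top[where kk=k0 and xi="xi l" and s="s l", OF f k0 _ xs sig r0 ori]) (use xi in blast)
    have tR: "topK (key m (\<lambda>_. 0) \<sigma> \<rho>) ?R = T" using T rho by blast
    have TR1: "qval ?R T = 1" using T rho by blast
    have e2: "topK (key m (\<lambda>_. 0) \<sigma> \<rho>) (qmult m Lam ?F ?R) =
       oplus m Lam (topK (key m (\<lambda>_. 0) \<sigma> \<rho>) ?F) (topK (key m (\<lambda>_. 0) \<sigma> \<rho>) ?R)"
      by (rule top_mult(2)[OF K F R(1) Fne R(2)])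
    have e3: "qval (qmult m Lam ?F ?R) (oplus m Lam (topK (key m (\<lambda>_. 0) \<sigma> \<rho>) ?F) (topK (key m (\<lambda>_. 0) \<sigma> \<rho>) ?R))
       = qval ?F (topK (key m (\<lambda>_. 0) \<sigma> \<rho>) ?F) * qval ?R (topK (key m (\<lambda>_. 0) \<sigma> \<rho>) ?R)"
      by (rule top_mult(3)[OF K F R(1) Fne R(2)])
    show "topK (key m (\<lambda>_. 0) \<sigma> \<rho>) (qprod m Lam (\<lambda>l. qfactor (xi l) (s l) f) (l # ls)) =
          oplus m Lam (vmul (s l) f, 0) T"
      unfolding qprod.simps e2 tF tR by (rule refl)
    have e4: "qval (qmult m Lam ?F ?R) (oplus m Lam (vmul (s l) f, 0) T) = qval ?F (vmul (s l) f, 0) * qval ?R T"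
      using e3 unfolding tF tR .
    show "qval (qprod m Lam (\<lambda>l. qfactor (xi l) (s l) f) (l # ls)) (oplus m Lam (vmul (s l) f, 0) T) = 1"
      unfolding qprod.simps e4 TR1 \<open>qval ?F (vmul (s l) f, 0) = 1\<close> by simp
  qed
qed

lemma qmult_zero_right: "qsupp Q = {} \<Longrightarrow> qmult m Lam P Q = (\<lambda>_ _. 0)"
  unfolding qmult_def by simp

lemma qmult_ne:
  assumes "qsupp (qmult m Lam P Q) \<noteq> {}"
  shows "qsupp P \<noteq> {}" "qsupp Q \<noteq> {}"
proof -
  show "qsupp P \<noteq> {}"
  proof
    assume "qsupp P = {}"
    hence "qmult m Lam P Q = (\<lambda>_ _. 0)" by (rule qmult_zero_left)
    with assms show False by (simp add: qsupp_empty_iff)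
  qed
  show "qsupp Q \<noteq> {}"
  proof
    assume "qsupp Q = {}"
    hence "qmult m Lam P Q = (\<lambda>_ _. 0)" by (rule qmult_zero_right)
    with assms show False by (simp add: qsupp_empty_iff)
  qed
qed

definition wf :: "ivec \<Rightarrow> nat \<Rightarrow> nat \<Rightarrow> ivec \<Rightarrow> int" where
  "wf f k l c = f k * c l - f l * c k"

lemma additive_wf: "additive (wf f k l)"
  unfolding additive_def wf_def by (simp add: algebra_simps)

lemma wf_swap: "wf f l k c = - wf f k l c"
  unfolding wf_def by simp

lemma wf_vmul: "wf f k l (vmul r f) = 0"
  unfolding wf_def vmul_def by simp

lemma key_first_le:
  assumes "key m w \<sigma> \<rho> p \<le> key m w \<sigma> \<rho> q"
  shows "w (fst p) \<le> w (fst q)"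
  using assms unfolding key_def ckey_def list_le_def by auto

lemma key_keyok1: "additive w \<Longrightarrow> keyok m Lam (key m w 1 1)"
  by (rule key_keyok) simp_all

lemma partA_half:
  assumes d: "d \<in> qtorus m" and x: "x \<in> qtorus m" and V: "qmult m Lam d x = V"
    and Vne: "qsupp V \<noteq> {}" and line: "\<forall>z\<in>qsupp V. \<exists>r. fst z = vmul r f"
    and w: "additive w" and w0: "\<And>r. w (vmul r f) = 0"
  shows "w (fst (topK (key m w 1 1) d)) + w (fst (topK (key m w 1 1) x)) = 0"
    "\<And>z. z \<in> qsupp d \<Longrightarrow> w (fst z) \<le> w (fst (topK (key m w 1 1) d))"
    "\<And>z. z \<in> qsupp x \<Longrightarrow> w (fst z) \<le> w (fst (topK (key m w 1 1) x))"
proof -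
  have K: "keyok m Lam (key m w 1 1)" by (rule key_keyok1[OF w])
  have dne: "qsupp d \<noteq> {}" and xne: "qsupp x \<noteq> {}" using qmult_ne[of m Lam d x] V Vne by auto
  have t: "topK (key m w 1 1) V = oplus m Lam (topK (key m w 1 1) d) (topK (key m w 1 1) x)"
    using top_mult(2)[OF K d x dne xne] V by simp
  have Vq: "V \<in> qtorus m" using qmult_qtorus[OF d x, of Lam] V by simp
  have "topK (key m w 1 1) V \<in> qsupp V" by (rule top_prop(1)[OF K Vq Vne])
  then obtain r where "fst (topK (key m w 1 1) V) = vmul r f" using line by blast
  hence "w (fst (topK (key m w 1 1) V)) = 0" using w0 by simp
  thus "w (fst (topK (key m w 1 1) d)) + w (fst (topK (key m w 1 1) x)) = 0"
    using t w unfolding oplus_def additive_def by simp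
  show "\<And>z. z \<in> qsupp d \<Longrightarrow> w (fst z) \<le> w (fst (topK (key m w 1 1) d))"
    using top_prop(2)[OF K d dne] key_first_le by blast
  show "\<And>z. z \<in> qsupp x \<Longrightarrow> w (fst z) \<le> w (fst (topK (key m w 1 1) x))"
    using top_prop(2)[OF K x xne] key_first_le by blast
qed

lemma partA:
  assumes d: "d \<in> qtorus m" and x: "x \<in> qtorus m" and V: "qmult m Lam d x = V"
    and Vne: "qsupp V \<noteq> {}" and line: "\<forall>z\<in>qsupp V. \<exists>r. fst z = vmul r f"
    and p: "p \<in> qsupp d" and p': "p' \<in> qsupp d"
  shows "wf f k l (fst p) = wf f k l (fst p')"
proof -
  have dne: "qsupp d \<noteq> {}" and xne: "qsupp x \<noteq> {}" using qmult_ne[of m Lam d x] V Vne by auto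
  let ?w = "wf f k l" and ?w' = "wf f l k"
  note A = partA_half[where w="wf f k l", OF d x V Vne line additive_wf wf_vmul]
  note B = partA_half[where w="wf f l k", OF d x V Vne line additive_wf wf_vmul]
  let ?t1d = "fst (topK (key m ?w 1 1) d)" and ?t1x = "fst (topK (key m ?w 1 1) x)"
  let ?t2d = "fst (topK (key m ?w' 1 1) d)" and ?t2x = "fst (topK (key m ?w' 1 1) x)"
  have K2: "keyok m Lam (key m ?w' 1 1)" by (rule key_keyok1[OF additive_wf])
  have t2x: "topK (key m ?w' 1 1) x \<in> qsupp x" by (rule top_prop(1)[OF K2 x xne])
  have e1: "?w ?t1d + ?w ?t1x = 0" using A(1) .
  have e2: "?w ?t2d + ?w ?t2x = 0" using B(1) unfolding wf_swap[of f l k] by simp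
  have i1: "?w ?t2x \<le> ?w ?t1x" using A(3)[OF t2x] .
  have i2: "\<And>z. z \<in> qsupp d \<Longrightarrow> ?w ?t2d \<le> ?w (fst z)" using B(2) unfolding wf_swap[of f l k] by fastforce
  have i3: "\<And>z. z \<in> qsupp d \<Longrightarrow> ?w (fst z) \<le> ?w ?t1d" using A(2) by blast
  have "\<And>z. z \<in> qsupp d \<Longrightarrow> ?w (fst z) = ?w ?t1d"
  proof -
    fix z assume z: "z \<in> qsupp d"
    show "?w (fst z) = ?w ?t1d" using e1 e2 i1 i2[OF z] i3[OF z] by linarith
  qed
  thus ?thesis using p p' by simp
qed

lemma key_same_c_le:
  assumes "key m w \<sigma> \<rho> (c, a) \<le> key m w \<sigma> \<rho> (c, b)"
  shows "\<rho> * a \<le> \<rho> * b"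
  using assms unfolding key_def list_le_def by (auto simp: list_app_less)

lemma key_ckey_le:
  assumes "key m w \<sigma> \<rho> p \<le> key m w \<sigma> \<rho> q"
  shows "ckey m w \<sigma> (fst p) \<le> ckey m w \<sigma> (fst q)"
  using assms unfolding key_def list_le_def by (auto simp: list_app_less)

lemma partB:
  assumes d: "d \<in> qtorus m" and x: "x \<in> qtorus m" and V: "qmult m Lam d x = V"
    and Vne: "qsupp V \<noteq> {}" and sig: "\<sigma> \<noteq> 0"
    and T: "\<forall>\<rho>\<in>{1,-1}. topK (key m (\<lambda>_. 0) \<sigma> \<rho>) V = T \<and> qval V T = 1"
    and e: "\<forall>z\<in>qsupp d. fst z = e"
  shows "\<exists>a0. qsupp d = {(e, a0)} \<and> (qval d (e, a0) = 1 \<or> qval d (e, a0) = -1)"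
proof -
  have dne: "qsupp d \<noteq> {}" and xne: "qsupp x \<noteq> {}" using qmult_ne[of m Lam d x] V Vne by auto
  have K1: "keyok m Lam (key m (\<lambda>_. 0) \<sigma> 1)" by (rule key_keyok0[OF sig]) simp
  have K2: "keyok m Lam (key m (\<lambda>_. 0) \<sigma> (-1))" by (rule key_keyok0[OF sig]) simp
  define p1 where "p1 = topK (key m (\<lambda>_. 0) \<sigma> 1) d"
  define p2 where "p2 = topK (key m (\<lambda>_. 0) \<sigma> (-1)) d"
  define q1 where "q1 = topK (key m (\<lambda>_. 0) \<sigma> 1) x"
  define q2 where "q2 = topK (key m (\<lambda>_. 0) \<sigma> (-1)) x"
  have p1: "p1 \<in> qsupp d" unfolding p1_def by (rule top_prop(1)[OF K1 d dne])
  have p2: "p2 \<in> qsupp d" unfolding p2_def by (rule top_prop(1)[OF K2 d dne])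
  have q1: "q1 \<in> qsupp x" unfolding q1_def by (rule top_prop(1)[OF K1 x xne])
  have q2: "q2 \<in> qsupp x" unfolding q2_def by (rule top_prop(1)[OF K2 x xne])
  have T1: "T = oplus m Lam p1 q1" using top_mult(2)[OF K1 d x dne xne] V T unfolding p1_def q1_def by auto
  have T2: "T = oplus m Lam p2 q2" using top_mult(2)[OF K2 d x dne xne] V T unfolding p2_def q2_def by auto
  have v1: "qval d p1 * qval x q1 = 1" using top_mult(3)[OF K1 d x dne xne] V T T1 unfolding p1_def q1_def by auto
  have fp1: "fst p1 = e" and fp2: "fst p2 = e" using p1 p2 e by auto
  have "ckey m (\<lambda>_. 0) \<sigma> (fst q2) \<le> ckey m (\<lambda>_. 0) \<sigma> (fst q1)"
    using top_prop(2)[OF K1 x xne q2] key_ckey_le unfolding q1_def by blast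
  moreover have "ckey m (\<lambda>_. 0) \<sigma> (fst q1) \<le> ckey m (\<lambda>_. 0) \<sigma> (fst q2)"
    using top_prop(2)[OF K2 x xne q1] key_ckey_le unfolding q2_def by blast
  ultimately have "ckey m (\<lambda>_. 0) \<sigma> (fst q1) = ckey m (\<lambda>_. 0) \<sigma> (fst q2)" by simp
  hence fq: "fst q1 = fst q2" using ckey_inj[OF sig qtorus_Zm[OF x q1] qtorus_Zm[OF x q2]] by blast
  have eqs: "snd p1 + snd q1 = snd p2 + snd q2"
    using T1 T2 fp1 fp2 fq unfolding oplus_def by simp
  have qle: "snd q2 \<le> snd q1"
  proof -
    have h: "key m (\<lambda>_. 0) \<sigma> 1 q2 \<le> key m (\<lambda>_. 0) \<sigma> 1 q1"
      using top_prop(2)[OF K1 x xne q2] unfolding q1_def .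
    have "q2 = (fst q1, snd q2)" using fq by simp
    hence "key m (\<lambda>_. 0) \<sigma> 1 (fst q1, snd q2) \<le> key m (\<lambda>_. 0) \<sigma> 1 (fst q1, snd q1)"
      using h by (metis prod.collapse)
    thus ?thesis using key_same_c_le by fastforce
  qed
  have le1: "\<And>z. z \<in> qsupp d \<Longrightarrow> snd z \<le> snd p1"
  proof -
    fix z assume z: "z \<in> qsupp d"
    have h: "key m (\<lambda>_. 0) \<sigma> 1 z \<le> key m (\<lambda>_. 0) \<sigma> 1 p1"
      using top_prop(2)[OF K1 d dne z] unfolding p1_def .
    obtain a where za: "z = (e, a)" using e z by (cases z) auto
    obtain b where pb: "p1 = (e, b)" using fp1 by (cases p1) auto
    have "1 * a \<le> 1 * b" using key_same_c_le[of m "\<lambda>_. 0" \<sigma> 1 e a b] h za pb by simp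
    thus "snd z \<le> snd p1" using za pb by simp
  qed
  have le2: "\<And>z. z \<in> qsupp d \<Longrightarrow> snd p2 \<le> snd z"
  proof -
    fix z assume z: "z \<in> qsupp d"
    have h: "key m (\<lambda>_. 0) \<sigma> (-1) z \<le> key m (\<lambda>_. 0) \<sigma> (-1) p2"
      using top_prop(2)[OF K2 d dne z] unfolding p2_def .
    obtain a where za: "z = (e, a)" using e z by (cases z) auto
    obtain b where pb: "p2 = (e, b)" using fp2 by (cases p2) auto
    have "(-1) * a \<le> (-1) * b" using key_same_c_le[of m "\<lambda>_. 0" \<sigma> "-1" e a b] h za pb by simp
    thus "snd p2 \<le> snd z" using za pb by simp
  qed
  have all: "snd z = snd p1" if z: "z \<in> qsupp d" for z
    using le1[OF z] le2[OF z] eqs qle by linarith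
  have "qsupp d = {(e, snd p1)}"
  proof
    show "qsupp d \<subseteq> {(e, snd p1)}" using all e by (auto simp: prod_eq_iff)
    show "{(e, snd p1)} \<subseteq> qsupp d" using p1 fp1 by (metis empty_subsetI insert_subset prod.collapse)
  qed
  moreover have "qval d (e, snd p1) = 1 \<or> qval d (e, snd p1) = -1"
    using v1 fp1 by (metis prod.collapse zmult_eq_1_iff)
  ultimately show ?thesis by blast
qed

definition mon :: "ivec \<times> int \<Rightarrow> int \<Rightarrow> qelem" where
  "mon z \<alpha> = (\<lambda>c a. if (c, a) = z then \<alpha> else 0)"

lemma qval_mon: "qval (mon z \<alpha>) y = (if y = z then \<alpha> else 0)"
  by (cases y) (simp add: qval_def mon_def)

lemma qsupp_mon: "qsupp (mon z \<alpha>) = (if \<alpha> = 0 then {} else {z})"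
  by (auto simp: qsupp_iff qval_mon split: if_splits)

lemma mon_qtorus: "in_Zm m (fst z) \<Longrightarrow> mon z \<alpha> \<in> qtorus m"
  by (simp add: qtorus_iff qsupp_mon)

lemma qval_ext: "(\<And>z. qval P z = qval Q z) \<Longrightarrow> P = Q"
  unfolding qval_def by (metis fst_conv snd_conv ext)

lemma qmult_mon_mon: "qmult m Lam (mon x \<alpha>) (mon y \<beta>) = mon (oplus m Lam x y) (\<alpha> * \<beta>)"
proof (rule qval_ext)
  fix z
  show "qval (qmult m Lam (mon x \<alpha>) (mon y \<beta>)) z = qval (mon (oplus m Lam x y) (\<alpha> * \<beta>)) z"
    unfolding qval_qmult qsupp_mon qval_mon by auto
qed

lemma qone_mon: "qone = mon ((\<lambda>_. 0), 0) 1"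
  by (rule qval_ext) (simp add: qone_val qval_mon)

lemma qX_mon: "qX c = mon (c, 0) 1"
  by (rule qval_ext) (auto simp: qval_def qX_def qmonom_def lp_one_def mon_def)

lemma qmult_mon_left: "\<alpha> \<noteq> 0 \<Longrightarrow> qval (qmult m Lam (mon x \<alpha>) Q) z =
   (\<Sum>y\<in>qsupp Q. if oplus m Lam x y = z then \<alpha> * qval Q y else 0)"
  unfolding qval_qmult qsupp_mon qval_mon by simp

lemma qmult_mon_right: "\<alpha> \<noteq> 0 \<Longrightarrow> qval (qmult m Lam Q (mon x \<alpha>)) z =
   (\<Sum>y\<in>qsupp Q. if oplus m Lam y x = z then qval Q y * \<alpha> else 0)"
  unfolding qval_qmult qsupp_mon qval_mon by simp

lemma sum_nonzero_ex: "(\<Sum>y\<in>A. if P y then g y else (0::int)) \<noteq> 0 \<Longrightarrow> \<exists>y\<in>A. P y"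
  by (metis (mono_tags, lifting) sum.neutral)

lemma commute_backward:
  assumes a: "\<alpha> \<noteq> 0" and h: "\<forall>z\<in>qsupp Q. bil m Lam e (fst z) = bil m Lam (fst z) e"
  shows "qmult m Lam (mon (e, a0) \<alpha>) Q = qmult m Lam Q (mon (e, a0) \<alpha>)"
proof (rule qval_ext)
  fix z
  have "\<And>y. y \<in> qsupp Q \<Longrightarrow> oplus m Lam (e, a0) y = oplus m Lam y (e, a0)"
    using h unfolding oplus_def by (auto simp: add.commute fun_eq_iff)
  thus "qval (qmult m Lam (mon (e, a0) \<alpha>) Q) z = qval (qmult m Lam Q (mon (e, a0) \<alpha>)) z"
    unfolding qmult_mon_left[OF a] qmult_mon_right[OF a]
    by (intro sum.cong refl) (auto simp: mult.commute)
qed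

lemma max_snd:
  assumes Q: "Q \<in> qtorus m" and cb: "(c, b) \<in> qsupp Q"
  obtains B where "(c, B) \<in> qsupp Q" "\<And>b'. (c, b') \<in> qsupp Q \<Longrightarrow> b' \<le> B"
proof -
  let ?S = "{b'. (c, b') \<in> qsupp Q}"
  have "?S = snd ` (qsupp Q \<inter> {z. fst z = c})" by force
  hence fin: "finite ?S" using Q by (simp add: qtorus_iff)
  have ne: "?S \<noteq> {}" using cb by blast
  have "Max ?S \<in> ?S" using fin ne by (rule Max_in)
  moreover have "\<And>b'. (c, b') \<in> qsupp Q \<Longrightarrow> b' \<le> Max ?S" using fin by simp
  ultimately show ?thesis using that by blast
qed

lemma commute_forward:
  assumes a: "\<alpha> \<noteq> 0" and Q: "Q \<in> qtorus m"
    and comm: "qmult m Lam (mon (e, a0) \<alpha>) Q = qmult m Lam Q (mon (e, a0) \<alpha>)"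
    and cb: "(c, b) \<in> qsupp Q"
  shows "bil m Lam e c = bil m Lam c e"
proof -
  obtain B where B: "(c, B) \<in> qsupp Q" "\<And>b'. (c, b') \<in> qsupp Q \<Longrightarrow> b' \<le> B"
    using max_snd[OF Q cb] by blast
  have fQ: "finite (qsupp Q)" using Q by (simp add: qtorus_iff)
  have mon_in: "(e, a0) \<in> qsupp (mon (e, a0) \<alpha>)" using a by (simp add: qsupp_mon)
  have fM: "finite (qsupp (mon (e, a0) \<alpha>))" by (simp add: qsupp_mon)
  have QcB: "qval Q (c, B) \<noteq> 0" using B(1) by (simp add: qsupp_iff)
  have v1: "qval (qmult m Lam (mon (e, a0) \<alpha>) Q) (oplus m Lam (e, a0) (c, B)) = \<alpha> * qval Q (c, B)"
    by (rule qval_qmult_single[OF mon_in B(1) _ fM fQ, simplified qval_mon, simplified])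
       (auto simp: qsupp_mon a dest: oplus_cancel1)
  hence "qval (qmult m Lam Q (mon (e, a0) \<alpha>)) (oplus m Lam (e, a0) (c, B)) \<noteq> 0"
    using comm a QcB by simp
  hence "\<exists>y\<in>qsupp Q. oplus m Lam y (e, a0) = oplus m Lam (e, a0) (c, B)"
    unfolding qmult_mon_right[OF a] by (rule sum_nonzero_ex)
  then obtain y where y: "y \<in> qsupp Q" "oplus m Lam y (e, a0) = oplus m Lam (e, a0) (c, B)" by blast
  hence "fst (oplus m Lam y (e, a0)) = fst (oplus m Lam (e, a0) (c, B))" by simp
  hence "(\<lambda>k. fst y k + e k) = (\<lambda>k. e k + c k)" unfolding oplus_def by simp
  hence yc: "fst y = c" by (auto simp: fun_eq_iff)
  have "snd (oplus m Lam y (e, a0)) = snd (oplus m Lam (e, a0) (c, B))" using y(2) by simp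
  hence "snd y + a0 + bil m Lam (fst y) e = a0 + B + bil m Lam e c" unfolding oplus_def by simp
  moreover have "snd y \<le> B" using B(2)[of "snd y"] y(1) yc by (metis prod.collapse)
  ultimately have i1: "bil m Lam e c \<le> bil m Lam c e" using yc by simp
  have v2: "qval (qmult m Lam Q (mon (e, a0) \<alpha>)) (oplus m Lam (c, B) (e, a0)) = qval Q (c, B) * \<alpha>"
    by (rule qval_qmult_single[OF B(1) mon_in _ fQ fM, simplified qval_mon, simplified])
       (auto simp: qsupp_mon a dest: oplus_cancel2)
  hence "qval (qmult m Lam (mon (e, a0) \<alpha>) Q) (oplus m Lam (c, B) (e, a0)) \<noteq> 0"
    using comm a QcB by simp
  hence "\<exists>y'\<in>qsupp Q. oplus m Lam (e, a0) y' = oplus m Lam (c, B) (e, a0)"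
    unfolding qmult_mon_left[OF a] by (rule sum_nonzero_ex)
  then obtain y' where y': "y' \<in> qsupp Q" "oplus m Lam (e, a0) y' = oplus m Lam (c, B) (e, a0)" by blast
  hence "fst (oplus m Lam (e, a0) y') = fst (oplus m Lam (c, B) (e, a0))" by simp
  hence "(\<lambda>k. e k + fst y' k) = (\<lambda>k. c k + e k)" unfolding oplus_def by simp
  hence yc': "fst y' = c" by (auto simp: fun_eq_iff)
  have "snd (oplus m Lam (e, a0) y') = snd (oplus m Lam (c, B) (e, a0))" using y'(2) by simp
  hence "a0 + snd y' + bil m Lam e (fst y') = B + a0 + bil m Lam c e" unfolding oplus_def by simp
  moreover have "snd y' \<le> B" using B(2)[of "snd y'"] y'(1) yc' by (metis prod.collapse)
  ultimately have i2: "bil m Lam c e \<le> bil m Lam e c" using yc' by simp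
  from i1 i2 show ?thesis by simp
qed

lemma bil_neg1: "bil m Lam (\<lambda>k. - e k) c = - bil m Lam e c"
  unfolding bil_def by (simp add: sum_negf[symmetric])

lemma bil_neg2: "bil m Lam c (\<lambda>k. - e k) = - bil m Lam c e"
  unfolding bil_def by (simp add: sum_negf[symmetric])

lemma qval_qadd: "qval (qadd P Q) z = qval P z + qval Q z"
  by (simp add: qval_def qadd_def)

lemma qval_qneg: "qval (qneg P) z = - qval P z"
  by (simp add: qval_def qneg_def)

lemma qsupp_qadd: "qsupp (qadd P Q) \<subseteq> qsupp P \<union> qsupp Q"
  by (auto simp: qsupp_iff qval_qadd)

lemma qsupp_qneg: "qsupp (qneg P) = qsupp P"
  by (auto simp: qsupp_iff qval_qneg)

definition goodij :: "nat \<Rightarrow> nat \<Rightarrow> nat \<Rightarrow> qelem \<Rightarrow> bool" where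
  "goodij m i j P \<longleftrightarrow> P \<in> qtorus m \<and> (\<forall>z\<in>qsupp P. fst z i = 0 \<and> fst z j = 0)"

lemma goodij_qmult: "goodij m i j P \<Longrightarrow> goodij m i j Q \<Longrightarrow> goodij m i j (qmult m Lam P Q)"
proof -
  assume P: "goodij m i j P" and Q: "goodij m i j Q"
  have "qmult m Lam P Q \<in> qtorus m" using P Q qmult_qtorus by (auto simp: goodij_def)
  moreover have "\<forall>z\<in>qsupp (qmult m Lam P Q). fst z i = 0 \<and> fst z j = 0"
  proof
    fix z assume "z \<in> qsupp (qmult m Lam P Q)"
    then obtain x y where "x \<in> qsupp P" "y \<in> qsupp Q" "oplus m Lam x y = z" using qsupp_qmult by blast
    thus "fst z i = 0 \<and> fst z j = 0" using P Q unfolding goodij_def oplus_def by auto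
  qed
  ultimately show ?thesis by (simp add: goodij_def)
qed

lemma goodij_qadd: "goodij m i j P \<Longrightarrow> goodij m i j Q \<Longrightarrow> goodij m i j (qadd P Q)"
proof -
  assume P: "goodij m i j P" and Q: "goodij m i j Q"
  have fin: "finite (qsupp (qadd P Q))"
    using P Q qsupp_qadd finite_subset by (metis finite_Un goodij_def qtorus_iff)
  show ?thesis using P Q fin qsupp_qadd[of P Q] unfolding goodij_def qtorus_iff by blast
qed

lemma goodij_qneg: "goodij m i j P \<Longrightarrow> goodij m i j (qneg P)"
  unfolding goodij_def qtorus_iff qsupp_qneg by blast

lemma L0vv_good:
  assumes i: "i \<in> {1..n}" and j: "j \<in> {1..n}" and nm: "n \<le> m" and P: "P \<in> L0vv m n Lam i j"
  shows "goodij m i j P"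
  using P unfolding L0vv_def
proof (induction rule: subring_gen.induct)
  case (sg_base P)
  thus ?case using i j unfolding ZP_def goodij_def by fastforce
next
  case (sg_gen P)
  then obtain k s where ks: "P = qX (\<lambda>l. s * unitvec k l)" "k \<in> {1..n} - {i, j}" "s = 1 \<or> s = -1" by blast
  have "in_Zm m (\<lambda>l. s * unitvec k l)" using ks(2) nm by (auto simp: in_Zm_def unitvec_def)
  moreover have "(\<lambda>l. s * unitvec k l) i = 0" "(\<lambda>l. s * unitvec k l) j = 0" using ks(2) by (auto simp: unitvec_def)
  ultimately show ?case unfolding ks(1) qX_mon goodij_def by (simp add: qtorus_iff qsupp_mon)
next
  case sg_one
  show ?case by (simp add: goodij_def qone_qtorus qsupp_qone)
next
  case (sg_add P Q) thus ?case using goodij_qadd by blast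
next
  case (sg_neg P) thus ?case using goodij_qneg by blast
next
  case (sg_mult P Q) thus ?case using goodij_qmult by blast
qed

lemma mon_L0vv_aux:
  assumes nm: "n \<le> m"
  shows "\<forall>c a. (\<Sum>k\<in>{1..n}. nat \<bar>c k\<bar>) = N \<longrightarrow> in_Zm m c \<longrightarrow> c i = 0 \<longrightarrow> c j = 0 \<longrightarrow>
           mon (c, a) \<alpha> \<in> L0vv m n Lam i j"
proof (induction N rule: less_induct)
  case (less N)
  show ?case
  proof (intro allI impI)
    fix c a assume sN: "(\<Sum>k\<in>{1..n}. nat \<bar>c k\<bar>) = N" and cZ: "in_Zm m c" and ci: "c i = 0" and cj: "c j = 0"
    show "mon (c, a) \<alpha> \<in> L0vv m n Lam i j"
    proof (cases "\<forall>k\<in>{1..n}. c k = 0")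
      case True
      have "mon (c, a) \<alpha> \<in> ZP m n"
        unfolding ZP_def using True mon_qtorus[of m "(c, a)" \<alpha>] cZ by (auto simp: qsupp_mon)
      thus ?thesis unfolding L0vv_def by (rule subring_gen.sg_base)
    next
      case False
      then obtain k where k: "k \<in> {1..n}" "c k \<noteq> 0" by blast
      have kij: "k \<noteq> i" "k \<noteq> j" using k ci cj by auto
      define s :: int where "s = (if c k > 0 then 1 else -1)"
      define u where "u = (\<lambda>l. s * unitvec k l)"
      define c' where "c' = (\<lambda>l. c l - u l)"
      have s1: "s = 1 \<or> s = -1" unfolding s_def by auto
      have c'k: "nat \<bar>c' k\<bar> + 1 = nat \<bar>c k\<bar>" using k(2) unfolding c'_def u_def s_def unitvec_def by auto
      have c'l: "\<And>l. l \<noteq> k \<Longrightarrow> c' l = c l" unfolding c'_def u_def unitvec_def by simp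
      have fin: "finite {1..n}" by simp
      have "(\<Sum>l\<in>{1..n}. nat \<bar>c l\<bar>) = nat \<bar>c k\<bar> + (\<Sum>l\<in>{1..n} - {k}. nat \<bar>c l\<bar>)"
        by (rule sum.remove[OF fin k(1)])
      moreover have "(\<Sum>l\<in>{1..n}. nat \<bar>c' l\<bar>) = nat \<bar>c' k\<bar> + (\<Sum>l\<in>{1..n} - {k}. nat \<bar>c' l\<bar>)"
        by (rule sum.remove[OF fin k(1)])
      moreover have "(\<Sum>l\<in>{1..n} - {k}. nat \<bar>c' l\<bar>) = (\<Sum>l\<in>{1..n} - {k}. nat \<bar>c l\<bar>)"
        using c'l by (intro sum.cong) auto
      ultimately have lt: "(\<Sum>l\<in>{1..n}. nat \<bar>c' l\<bar>) < N" using sN c'k by linarith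
      have uZ: "in_Zm m u" using k(1) nm unfolding u_def by (auto simp: in_Zm_def unitvec_def)
      have c'Z: "in_Zm m c'" using cZ uZ unfolding c'_def in_Zm_def by auto
      have c'i: "c' i = 0" "c' j = 0" using ci cj kij unfolding c'_def u_def unitvec_def by auto
      have IH: "mon (c', a - bil m Lam c' u) \<alpha> \<in> L0vv m n Lam i j"
        using less.IH[OF lt] c'Z c'i by blast
      have gen: "qX u \<in> L0vv m n Lam i j"
        unfolding L0vv_def u_def using k(1) kij s1 by (intro subring_gen.sg_gen) blast
      have "qmult m Lam (mon (c', a - bil m Lam c' u) \<alpha>) (qX u) = mon (c, a) \<alpha>"
      proof -
        have "oplus m Lam (c', a - bil m Lam c' u) (u, 0) = (c, a)"
          unfolding oplus_def c'_def by (simp add: fun_eq_iff)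
        thus ?thesis unfolding qX_mon qmult_mon_mon by simp
      qed
      moreover have "qmult m Lam (mon (c', a - bil m Lam c' u) \<alpha>) (qX u) \<in> L0vv m n Lam i j"
        using IH gen unfolding L0vv_def by (rule subring_gen.sg_mult)
      ultimately show ?thesis by simp
    qed
  qed
qed

lemma mon_L0vv:
  assumes "n \<le> m" "in_Zm m c" "c i = 0" "c j = 0"
  shows "mon (c, a) \<alpha> \<in> L0vv m n Lam i j"
  using mon_L0vv_aux[OF assms(1)] assms(2-4) by blast

lemma indep_zero:
  fixes f1 f2 g :: ivec
  assumes indep: "\<forall>a b :: int. (\<forall>k. a * f1 k + b * f2 k = 0) \<longrightarrow> a = 0 \<and> b = 0"
    and h1: "\<And>k l. f1 k * g l = f1 l * g k" and h2: "\<And>k l. f2 k * g l = f2 l * g k"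
  shows "g l0 = 0"
proof (rule ccontr)
  assume g0: "g l0 \<noteq> 0"
  define a where "a = f2 l0 * g l0"
  define b where "b = - (f1 l0 * g l0)"
  have "\<forall>k. a * f1 k + b * f2 k = 0"
  proof
    fix k
    have "a * f1 k + b * f2 k = f2 l0 * (f1 k * g l0) - f1 l0 * (f2 k * g l0)"
      unfolding a_def b_def by (simp add: algebra_simps)
    also have "\<dots> = f2 l0 * (f1 l0 * g k) - f1 l0 * (f2 l0 * g k)" using h1[of k l0] h2[of k l0] by simp
    also have "\<dots> = 0" by (simp add: algebra_simps)
    finally show "a * f1 k + b * f2 k = 0" .
  qed
  hence "a = 0 \<and> b = 0" using indep by blast
  hence z: "f1 l0 = 0" "f2 l0 = 0" using g0 unfolding a_def b_def by auto
  have "\<forall>k. 1 * f1 k + 0 * f2 k = 0"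
  proof
    fix k
    have "f1 k * g l0 = 0" using h1[of k l0] z by simp
    thus "1 * f1 k + 0 * f2 k = 0" using g0 by simp
  qed
  hence "(1::int) = 0 \<and> (0::int) = 0" using indep by blast
  thus False by simp
qed

lemma wf_diff: "wf f k l c = wf f k l c' \<Longrightarrow> f k * (c l - c' l) = f l * (c k - c' k)"
  unfolding wf_def by (simp add: algebra_simps)

theorem lemma3p2:
  fixes m n i j N N1 :: nat
    and Lam B :: "nat \<Rightarrow> nat \<Rightarrow> int"
    and d :: "nat \<Rightarrow> nat" and h :: "nat \<Rightarrow> nat \<Rightarrow> lpoly"
    and f1 f2 :: ivec
    and s t :: "nat \<Rightarrow> nat"
    and xi zeta :: "nat \<Rightarrow> nat \<Rightarrow> lpoly"
  assumes "1 \<le> n" and "n \<le> m"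
    and "quantum_seed m n Lam B d h"
    and "i \<in> {1..n}" and "j \<in> {1..n}" and "i \<noteq> j"
    and "\<forall>k. k \<notin> {1..m} - {i, j} \<longrightarrow> f1 k = 0"
    and "\<forall>k. k \<notin> {1..m} - {i, j} \<longrightarrow> f2 k = 0"
    and "\<forall>k\<in>{1..m} - {i, j}. bil m Lam f1 (unitvec k) = 0"
    and "\<forall>k\<in>{1..m} - {i, j}. bil m Lam f2 (unitvec k) = 0"
    and "N > 0" and "N1 > 0"
    and "\<forall>l r. is_lpoly (xi l r)" and "\<forall>l r. is_lpoly (zeta l r)"
    and "\<forall>l\<in>{1..N}. xi l (s l) = lp_one"
    and "\<forall>l\<in>{1..N1}. zeta l (t l) = lp_one"
    and "\<forall>a b :: int. (\<forall>k. a * f1 k + b * f2 k = 0) \<longrightarrow> a = 0 \<and> b = 0"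
  shows "coprime_in m Lam (center m Lam (L0vv m n Lam i j))
           (qprod m Lam (\<lambda>l. qfactor (xi l) (s l) f1) [1..<N+1])
           (qprod m Lam (\<lambda>l. qfactor (zeta l) (t l) f2) [1..<N1+1])"
proof -
  note nm = assms(2) and ij = assms(4,5) and indep = assms(17)
  let ?V1 = "qprod m Lam (\<lambda>l. qfactor (xi l) (s l) f1) [1..<N+1]"
  let ?V2 = "qprod m Lam (\<lambda>l. qfactor (zeta l) (t l) f2) [1..<N1+1]"
  let ?L = "L0vv m n Lam i j"
  let ?C = "center m Lam ?L"
  have f1Z: "in_Zm m f1" using assms(7) by (auto simp: in_Zm_def)
  have f2Z: "in_Zm m f2" using assms(8) by (auto simp: in_Zm_def)
  obtain k1 where k1: "f1 k1 \<noteq> 0"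
  proof (cases "\<forall>k. f1 k = 0")
    case True
    hence "\<forall>k. 1 * f1 k + 0 * f2 k = 0" by simp
    hence "(1::int) = 0" using indep by blast
    thus ?thesis by simp
  qed blast
  obtain k2 where k2: "f2 k2 \<noteq> 0"
  proof (cases "\<forall>k. f2 k = 0")
    case True
    hence "\<forall>k. 0 * f1 k + 1 * f2 k = 0" by simp
    hence "(1::int) = 0" using indep by blast
    thus ?thesis by simp
  qed blast
  have top1: "\<forall>l\<in>set [1..<N+1]. xi l (s l) = lp_one" using assms(15) by auto
  have top2: "\<forall>l\<in>set [1..<N1+1]. zeta l (t l) = lp_one" using assms(16) by auto
  have B1: "?V1 \<in> qtorus m" "qsupp ?V1 \<noteq> {}" "\<forall>z\<in>qsupp ?V1. \<exists>r. fst z = vmul r f1"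
    using qprod_basic[OF f1Z k1 assms(13) top1, of Lam] by auto
  have B2: "?V2 \<in> qtorus m" "qsupp ?V2 \<noteq> {}" "\<forall>z\<in>qsupp ?V2. \<exists>r. fst z = vmul r f2"
    using qprod_basic[OF f2Z k2 assms(14) top2, of Lam] by auto
  show ?thesis unfolding coprime_in_def
  proof (intro ballI impI)
    fix D assume DC: "D \<in> ?C" and div: "(\<exists>x\<in>?C. ?V1 = qmult m Lam D x) \<and> (\<exists>y\<in>?C. ?V2 = qmult m Lam D y)"
    from div obtain X where XC: "X \<in> ?C" and V1': "?V1 = qmult m Lam D X" by blast
    from div obtain Y where YC: "Y \<in> ?C" and V2': "?V2 = qmult m Lam D Y" by blast
    have V1: "qmult m Lam D X = ?V1" using V1' by simp
    have V2: "qmult m Lam D Y = ?V2" using V2' by simp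
    have DL: "D \<in> ?L" and DCom: "\<forall>y\<in>?L. qmult m Lam D y = qmult m Lam y D" using DC by (auto simp: center_def)
    have XL: "X \<in> ?L" and YL: "Y \<in> ?L" using XC YC by (auto simp: center_def)
    have Dg: "goodij m i j D" by (rule L0vv_good[OF ij nm DL])
    have Xg: "goodij m i j X" by (rule L0vv_good[OF ij nm XL])
    have Yg: "goodij m i j Y" by (rule L0vv_good[OF ij nm YL])
    have Dq: "D \<in> qtorus m" and Xq: "X \<in> qtorus m" and Yq: "Y \<in> qtorus m"
      using Dg Xg Yg by (auto simp: goodij_def)
    have Dne: "qsupp D \<noteq> {}" using qmult_ne(1)[of m Lam D X] V1 B1(2) by simp
    then obtain p0 where p0: "p0 \<in> qsupp D" by blast
    define e where "e = fst p0"
    have same: "\<forall>z\<in>qsupp D. fst z = e"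
    proof
      fix z assume z: "z \<in> qsupp D"
      have h1: "\<And>k l. f1 k * ((\<lambda>l. fst z l - e l) l) = f1 l * ((\<lambda>l. fst z l - e l) k)"
        using wf_diff[OF partA[OF Dq Xq V1 B1(2) B1(3) z p0]] unfolding e_def by simp
      have h2: "\<And>k l. f2 k * ((\<lambda>l. fst z l - e l) l) = f2 l * ((\<lambda>l. fst z l - e l) k)"
        using wf_diff[OF partA[OF Dq Yq V2 B2(2) B2(3) z p0]] unfolding e_def by simp
      have "\<And>l0. fst z l0 - e l0 = 0"
        using indep_zero[OF indep h1 h2] by simp
      thus "fst z = e" by (simp add: fun_eq_iff)
    qed
    obtain \<sigma> where sig: "\<sigma> = 1 \<or> \<sigma> = -1" and ori: "ckey m (\<lambda>_. 0) \<sigma> (\<lambda>_. 0) < ckey m (\<lambda>_. 0) \<sigma> f1"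
      using orient_ex[OF f1Z k1] by blast
    have sig0: "\<sigma> \<noteq> 0" using sig by auto
    obtain T where T: "\<forall>\<rho>\<in>{1,-1}. topK (key m (\<lambda>_. 0) \<sigma> \<rho>) ?V1 = T \<and> qval ?V1 T = 1"
      using qprod_top[OF f1Z k1 assms(13) top1 sig0 ori, of Lam] by blast
    obtain a0 where a0: "qsupp D = {(e, a0)}" "qval D (e, a0) = 1 \<or> qval D (e, a0) = -1"
      using partB[OF Dq Xq V1 B1(2) sig0 T same] by blast
    define \<alpha> where "\<alpha> = qval D (e, a0)"
    have a1: "\<alpha> * \<alpha> = 1" and an: "\<alpha> \<noteq> 0" using a0(2) unfolding \<alpha>_def by auto
    have Dmon: "D = mon (e, a0) \<alpha>"
    proof (rule qval_ext)
      fix z show "qval D z = qval (mon (e, a0) \<alpha>) z"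
      proof (cases "z = (e, a0)")
        case True thus ?thesis unfolding qval_mon \<alpha>_def by simp
      next
        case False
        hence "z \<notin> qsupp D" using a0(1) by blast
        hence "qval D z = 0" unfolding qsupp_iff by blast
        thus ?thesis using False unfolding qval_mon by simp
      qed
    qed
    have eZ: "in_Zm m e" using qtorus_Zm[OF Dq p0] unfolding e_def .
    have eij: "e i = 0" "e j = 0" using Dg p0 unfolding goodij_def e_def by auto
    define u where "u = mon ((\<lambda>k. - e k), - a0 - bil m Lam e (\<lambda>k. - e k)) \<alpha>"
    have du: "qmult m Lam D u = qone"
    proof -
      have "oplus m Lam (e, a0) ((\<lambda>k. - e k), - a0 - bil m Lam e (\<lambda>k. - e k)) = ((\<lambda>_. 0), 0)"
        unfolding oplus_def by simp
      thus ?thesis unfolding Dmon u_def qmult_mon_mon qone_mon a1 by simp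
    qed
    have mZ: "in_Zm m (\<lambda>k. - e k)" using eZ by (simp add: in_Zm_def)
    have uL: "u \<in> ?L" unfolding u_def by (rule mon_L0vv[OF nm mZ]) (simp_all add: eij)
    have "\<forall>y\<in>?L. qmult m Lam u y = qmult m Lam y u"
    proof
      fix Q assume QL: "Q \<in> ?L"
      have Qq: "Q \<in> qtorus m" using L0vv_good[OF ij nm QL] by (simp add: goodij_def)
      have comm: "qmult m Lam (mon (e, a0) \<alpha>) Q = qmult m Lam Q (mon (e, a0) \<alpha>)"
        using DCom QL Dmon by simp
      have "\<forall>z\<in>qsupp Q. bil m Lam (\<lambda>k. - e k) (fst z) = bil m Lam (fst z) (\<lambda>k. - e k)"
      proof
        fix z assume z: "z \<in> qsupp Q"
        have "(fst z, snd z) \<in> qsupp Q" using z by simp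
        hence "bil m Lam e (fst z) = bil m Lam (fst z) e" by (rule commute_forward[OF an Qq comm])
        thus "bil m Lam (\<lambda>k. - e k) (fst z) = bil m Lam (fst z) (\<lambda>k. - e k)"
          by (simp add: bil_neg1 bil_neg2)
      qed
      thus "qmult m Lam u Q = qmult m Lam Q u" unfolding u_def by (rule commute_backward[OF an])
    qed
    hence uC: "u \<in> ?C" using uL by (simp add: center_def)
    show "\<exists>u\<in>?C. qmult m Lam D u = qone" using uC du by blast
  qed
qed

end
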